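(* Let $p_i$ and $p_j$ ($i\ne j$) be two input-state walks in the colored union graph $\mathcal G_c$ of a switched system $(A_k,B_k)_{k=1}^N$, and let $\hat p_i,\hat p_j$ be their MDG-paths in the multi-layer dynamic graph $\hat{\mathcal G}_{\bar l}$ with $\bar l\ge\max\{|p_i|,|p_j|\}$. If either $p_i$ and $p_j$ are vertex-disjoint, or $\mathrm{ins}(p_i^c,p_j^c)\neq\emptyset$ and $\mathrm{Pins}(p_i^c\backslash p_j^c)$ and $\mathrm{Pins}(p_j^c\backslash p_i^c)$ have distinct color indices, then $\hat p_i$ and $\hat p_j$ are vertex-disjoint.
   Context: Setting: a switched system with subsystems $(A_k,B_k)$, $A_k\in\mathbb{R}^{n\times n}$, $B_k\in\mathbb{R}^{n\times m_k}$, $k\in[N]=\{1,\dots,N\}$; $A_k(p,j)$, $B_l(q,j)$ denote entries. Colored union graph $\mathcal G_c$: vertices $X=\{x_1,\dots,x_n\}$ and $U=\bigcup_{k}U_k$, $U_k=\{u^k_1,\dots,u^k_{m_k}\}$; for each $k$ and each $A_k(j,q)\ne0$ there is a state edge $(x_q,x_j)$ with color index $k$ (parallel edges of different colors are allowed), and for each $B_k(j,q)\neq 0$ an input edge $(u^k_q,x_j)$ with color index $k$. An input-state walk is a walk with tail in $U$ and head in $X$. The color index of a walk is the sequence of color indices of its edges. The reverse walk $p^c$ of $p=(e_1,\dots,e_k)$ is $(e_k^c,\dots,e_1^c)$ where $e^c$ reverses the direction of $e$ (keeping its color). For walks $p_1=(v_{i_1},\dots,v_{i_k})$ and $p_2=(v_{j_1},\dots,v_{j_{k'}})$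 (as vertex sequences), $\mathrm{ins}(p_1,p_2)=v_{i_{k^*}}$ with $k^*=\min\{q: i_q=j_q\}$ (the first vertex two walkers moving simultaneously along the walks occupy at the same time), and $\mathrm{ins}(p_1,p_2)=\emptyset$ if no such $q$ exists; if $\mathrm{ins}(p_1,p_2)\ne\emptyset$, $\mathrm{Pins}(p_1\backslash p_2)=(v_{i_1},\dots,v_{i_{k^*}})$ and $\mathrm{Pins}(p_2\backslash p_1)=(v_{j_1},\dots,v_{j_{k^*}})$. Multi-layer dynamic graph $\hat{\mathcal G}_{\bar l}$: layers $0,\dots,\bar l$. Layer 0: $\hat X_0=\{x^{00}_{p0}:p\in[n]\}$, $\hat U_0=\{u^{00}_{k,j0}: j\in[N],k\in[m_j]\}$, edges $(u^{00}_{k,j0},x^{00}_{q0})$ when $B_j(q,k)\ne0$. Layer $i\ge1$: $\hat X_i=\{x^{kt}_{ji}: j\in[n],k\in[N],t\in[N^{i-1}]\}$, $\hat U_i=\{u^{kt}_{j,li}: k,l\in[N],j\in[m_l],t\in[N^{i-1}]\}$, edges $(u^{kt}_{j,li},x^{kt}_{qi})$ when $B_l(q,j)\ne0$. Edges $(x^{k1}_{j1},x^{00}_{p0})$ when $A_k(p,j)\ne0$; for $i\ge2$, edges $(x^{kt}_{ji},x^{k't'}_{p,i-1})$ when $A_k(p,j)\ne 0$, for $k,k'\in[N]$, $t'\in[N^{i-2}]$, $t=(k'-1)N^{i-2}+t'$. An edge $(x^{kt}_{ji},\cdot)$ between layers has color index $k$. MDG-path: for an input-state walk $p$ of length $k$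 whose successive edges have colors $i_1,\dots,i_k$ and pass through vertices $u^{i_1}_{j_1},x_{j_2},\dots,x_{j_{k+1}}$, its MDG-path $\hat p$ (in any $\hat{\mathcal G}_{\bar l}$ with $\bar l\ge k$) is the unique path of the form $(u^{i_2,\bullet}_{j_1,i_1,k-1},x^{i_2,\bullet}_{j_2,k-1},x^{i_3,\bullet}_{j_3,k-2},\dots,x^{i_k,1}_{j_k,1},x^{00}_{j_{k+1},0})$, where the copy indices $\bullet$ are those forced by the edge structure (for $k=1$ it is $(u^{00}_{j_1,i_1 0},x^{00}_{j_2,0})$). *)

theory Defs
  imports Complex_Main
begin

text \<open>Switched system: N subsystems, state dimension n, input dimensions m k.
  A k p j is the entry A_k(p,j), B k q j is the entry B_k(q,j); all indices 1-based.
  Entries outside the index ranges are ignored.\<close>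

datatype cvert = X nat
  | U nat nat           \<comment> \<open>U k q = u^k_q\<close>

type_synonym cedge = "cvert \<times> cvert \<times> nat"

definition etail :: "cedge \<Rightarrow> cvert" where "etail e = fst e"
definition ehead :: "cedge \<Rightarrow> cvert" where "ehead e = fst (snd e)"
definition ecol  :: "cedge \<Rightarrow> nat"   where "ecol e = snd (snd e)"

definition cug_edges ::
  "nat \<Rightarrow> nat \<Rightarrow> (nat \<Rightarrow> nat) \<Rightarrow> (nat \<Rightarrow> nat \<Rightarrow> nat \<Rightarrow> real) \<Rightarrow> (nat \<Rightarrow> nat \<Rightarrow> nat \<Rightarrow> real) \<Rightarrow> cedge set"
  where
  "cug_edges N n m A B =
     {(X q, X j, k) | k j q. k \<in> {1..N} \<and> j \<in> {1..n} \<and> q \<in> {1..n} \<and> A k j q \<noteq> 0}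
   \<union> {(U k q, X j, k) | k j q. k \<in> {1..N} \<and> j \<in> {1..n} \<and> q \<in> {1..m k} \<and> B k j q \<noteq> 0}"

definition is_walk ::
  "nat \<Rightarrow> nat \<Rightarrow> (nat \<Rightarrow> nat) \<Rightarrow> (nat \<Rightarrow> nat \<Rightarrow> nat \<Rightarrow> real) \<Rightarrow> (nat \<Rightarrow> nat \<Rightarrow> nat \<Rightarrow> real) \<Rightarrow> cedge list \<Rightarrow> bool"
  where
  "is_walk N n m A B p \<longleftrightarrow> p \<noteq> [] \<and> set p \<subseteq> cug_edges N n m A B \<and>
     (\<forall>s. Suc s < length p \<longrightarrow> ehead (p ! s) = etail (p ! Suc s))"

definition is_input_vertex :: "cvert \<Rightarrow> bool" where
  "is_input_vertex v \<longleftrightarrow> (\<exists>k q. v = U k q)"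

definition is_state_vertex :: "cvert \<Rightarrow> bool" where
  "is_state_vertex v \<longleftrightarrow> (\<exists>j. v = X j)"

definition is_input_state_walk where
  "is_input_state_walk N n m A B p \<longleftrightarrow> is_walk N n m A B p \<and>
     is_input_vertex (etail (hd p)) \<and> is_state_vertex (ehead (last p))"

definition walk_verts :: "cedge list \<Rightarrow> cvert list" where
  "walk_verts p = etail (hd p) # map ehead p"

definition color_index :: "cedge list \<Rightarrow> nat list" where
  "color_index p = map ecol p"

definition rev_edge :: "cedge \<Rightarrow> cedge" where
  "rev_edge e = (ehead e, etail e, ecol e)"

definition rev_walk :: "cedge list \<Rightarrow> cedge list" where
  "rev_walk p = rev (map rev_edge p)"

text \<open>0-based position q of the first common vertex of two simultaneously
  traversed vertex sequences (paper's k* = q + 1).\<close>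
definition ins_pos :: "'v list \<Rightarrow> 'v list \<Rightarrow> nat option" where
  "ins_pos vs ws = (if \<exists>q. q < length vs \<and> q < length ws \<and> vs ! q = ws ! q
     then Some (LEAST q. q < length vs \<and> q < length ws \<and> vs ! q = ws ! q) else None)"

text \<open>ins(p1,p2), None standing for the empty set.\<close>
definition ins :: "cedge list \<Rightarrow> cedge list \<Rightarrow> cvert option" where
  "ins p1 p2 = map_option (\<lambda>q. walk_verts p1 ! q) (ins_pos (walk_verts p1) (walk_verts p2))"

text \<open>Pins(p1 \ p2): the initial subwalk of p1 up to the intersection vertex
  (as a list of edges, so that its color index is defined).\<close>
definition Pins :: "cedge list \<Rightarrow> cedge list \<Rightarrow> cedge list" where
  "Pins p1 p2 = take (the (ins_pos (walk_verts p1) (walk_verts p2))) p1"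

datatype mvert =
    MX nat nat nat nat       \<comment> \<open>MX k t j i = x^{kt}_{ji}\<close>
  | MU nat nat nat nat nat   \<comment> \<open>MU k t j l i = u^{kt}_{j,li}\<close>

definition mdg_vertices ::
  "nat \<Rightarrow> nat \<Rightarrow> (nat \<Rightarrow> nat) \<Rightarrow> nat \<Rightarrow> mvert set" where
  "mdg_vertices N n m lbar =
     {MX 0 0 p 0 | p. p \<in> {1..n}}
   \<union> {MU 0 0 k j 0 | k j. j \<in> {1..N} \<and> k \<in> {1..m j}}
   \<union> {MX k t j i | k t j i. 1 \<le> i \<and> i \<le> lbar \<and> j \<in> {1..n} \<and> k \<in> {1..N} \<and> t \<in> {1..N^(i-1)}}
   \<union> {MU k t j l i | k t j l i. 1 \<le> i \<and> i \<le> lbar \<and> k \<in> {1..N} \<and> l \<in> {1..N}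
        \<and> j \<in> {1..m l} \<and> t \<in> {1..N^(i-1)}}"

definition mdg_edges ::
  "nat \<Rightarrow> nat \<Rightarrow> (nat \<Rightarrow> nat) \<Rightarrow> (nat \<Rightarrow> nat \<Rightarrow> nat \<Rightarrow> real) \<Rightarrow> (nat \<Rightarrow> nat \<Rightarrow> nat \<Rightarrow> real) \<Rightarrow> nat
   \<Rightarrow> (mvert \<times> mvert) set" where
  "mdg_edges N n m A B lbar =
     {(MU 0 0 k j 0, MX 0 0 q 0) | k j q. j \<in> {1..N} \<and> k \<in> {1..m j} \<and> q \<in> {1..n} \<and> B j q k \<noteq> 0}
   \<union> {(MU k t j l i, MX k t q i) | k t j l i q. 1 \<le> i \<and> i \<le> lbar \<and> k \<in> {1..N} \<and> l \<in> {1..N}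
        \<and> j \<in> {1..m l} \<and> t \<in> {1..N^(i-1)} \<and> q \<in> {1..n} \<and> B l q j \<noteq> 0}
   \<union> {(MX k 1 j 1, MX 0 0 p 0) | k j p. 1 \<le> lbar \<and> k \<in> {1..N} \<and> j \<in> {1..n} \<and> p \<in> {1..n}
        \<and> A k p j \<noteq> 0}
   \<union> {(MX k t j i, MX k' t' p (i - 1)) | k t j i k' t' p. 2 \<le> i \<and> i \<le> lbar \<and> k \<in> {1..N}
        \<and> k' \<in> {1..N} \<and> t' \<in> {1..N^(i-2)} \<and> t = (k' - 1) * N^(i-2) + t'
        \<and> j \<in> {1..n} \<and> p \<in> {1..n} \<and> A k p j \<noteq> 0}"

text \<open>P is the MDG-path of the input-state walk p in the MDG with lbar layers:
  a path of the MDG of the prescribed form (copy indices t left free, i.e.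
  determined by the edge structure).\<close>
definition is_mdg_path_of ::
  "nat \<Rightarrow> nat \<Rightarrow> (nat \<Rightarrow> nat) \<Rightarrow> (nat \<Rightarrow> nat \<Rightarrow> nat \<Rightarrow> real) \<Rightarrow> (nat \<Rightarrow> nat \<Rightarrow> nat \<Rightarrow> real) \<Rightarrow> nat
   \<Rightarrow> cedge list \<Rightarrow> mvert list \<Rightarrow> bool" where
  "is_mdg_path_of N n m A B lbar p P \<longleftrightarrow>
     length P = Suc (length p) \<and>
     set P \<subseteq> mdg_vertices N n m lbar \<and>
     (\<forall>s < length p. (P ! s, P ! Suc s) \<in> mdg_edges N n m A B lbar) \<and>
     (\<exists>l q. etail (p ! 0) = U l q \<and>
        (if length p = 1 then P ! 0 = MU 0 0 q l 0
         else (\<exists>t. P ! 0 = MU (ecol (p ! 1)) t q l (length p - 1)))) \<and>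
     (\<forall>s. 1 \<le> s \<and> s < length p \<longrightarrow>
        (\<exists>t j. ehead (p ! (s - 1)) = X j \<and> P ! s = MX (ecol (p ! s)) t j (length p - s))) \<and>
     (\<exists>j. ehead (p ! (length p - 1)) = X j \<and> P ! length p = MX 0 0 j 0)"

end

theory Submission
  imports Defs
begin

lemma edge_MX_MX:
  assumes "(MX c t j L, MX c1 t1 j1 L1) \<in> mdg_edges N n m A B lbar" "L \<ge> 2"
  shows "L1 = L-1 \<and> c1 \<in> {1..N} \<and> t1 \<in> {1..N^(L-2)} \<and> t = (c1-1)*N^(L-2)+t1"
  using assms unfolding mdg_edges_def by auto

lemma edge_MU:
  assumes "(MU c t q l L, MX c1 t1 j1 L1) \<in> mdg_edges N n m A B lbar"
  shows "c1 = c \<and> t1 = t \<and> L1 = L"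
  using assms unfolding mdg_edges_def by auto

lemma decode:
  fixes a a' b b' M :: nat
  assumes "(a-1)*M + b = (a'-1)*M + b'" "b \<in> {1..M}" "b' \<in> {1..M}" "a \<ge> 1" "a' \<ge> 1"
  shows "a = a' \<and> b = b'"
proof -
  have e: "(a-1)*M + (b-1) = (a'-1)*M + (b'-1)" using assms by auto
  have M: "M > 0" using assms by auto
  have "b - 1 < M" "b' - 1 < M" using assms by auto
  moreover from this have "((a-1)*M + (b-1)) div M = a - 1" "((a'-1)*M + (b'-1)) div M = a' - 1" using M by simp_all
  ultimately have "a - 1 = a' - 1" using e by metis
  then show ?thesis using e assms by auto
qed

lemma path_mid:
  assumes "is_mdg_path_of N n m A B lbar p P" "1 \<le> s" "s < length p"
  shows "\<exists>t j. ehead (p ! (s - 1)) = X j \<and> P ! s = MX (ecol (p ! s)) t j (length p - s)"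
  using assms unfolding is_mdg_path_of_def by blast

lemma mx_cols:
  assumes Pi: "is_mdg_path_of N n m A B lbar qi Pi" and Pj: "is_mdg_path_of N n m A B lbar qj Pj"
  shows "1 \<le> L \<Longrightarrow> L < length qi \<Longrightarrow> L < length qj \<Longrightarrow> Pi!(length qi - L) = MX c t j L
    \<Longrightarrow> Pj!(length qj - L) = MX c t j' L \<Longrightarrow> 1 \<le> L' \<Longrightarrow> L' \<le> L
    \<Longrightarrow> ecol (qi!(length qi - L')) = ecol (qj!(length qj - L'))"
proof (induction L arbitrary: c t j j' L')
  case 0 then show ?case by simp
next
  case (Suc L)
  obtain t0 j0 where "Pi ! (length qi - Suc L) = MX (ecol (qi ! (length qi - Suc L))) t0 j0 (length qi - (length qi - Suc L))"
    using path_mid[OF Pi, of "length qi - Suc L"] Suc.prems by auto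
  then have ci: "c = ecol (qi ! (length qi - Suc L))" using Suc.prems by simp
  obtain t0' j0' where "Pj ! (length qj - Suc L) = MX (ecol (qj ! (length qj - Suc L))) t0' j0' (length qj - (length qj - Suc L))"
    using path_mid[OF Pj, of "length qj - Suc L"] Suc.prems by auto
  then have cj: "c = ecol (qj ! (length qj - Suc L))" using Suc.prems by simp
  show ?case
  proof (cases "L' = Suc L")
    case True then show ?thesis using ci cj by simp
  next
    case False
    then have L1: "L \<ge> 1" "L' \<le> L" using Suc.prems by auto
    have k1: "1 \<le> length qi - L" "length qi - L < length qi" "length qi - (length qi - L) = L" using Suc.prems L1 by auto
    have k2: "1 \<le> length qj - L" "length qj - L < length qj" "length qj - (length qj - L) = L" using Suc.prems L1 by auto
    have "\<exists>t1 j1. Pi ! (length qi - L) = MX (ecol (qi ! (length qi - L))) t1 j1 L"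
      using path_mid[OF Pi k1(1) k1(2)] k1(3) by metis
    then obtain t1 j1 where P1: "Pi ! (length qi - L) = MX (ecol (qi ! (length qi - L))) t1 j1 L" by blast
    have "\<exists>t2 j2. Pj ! (length qj - L) = MX (ecol (qj ! (length qj - L))) t2 j2 L"
      using path_mid[OF Pj k2(1) k2(2)] k2(3) by metis
    then obtain t2 j2 where P2: "Pj ! (length qj - L) = MX (ecol (qj ! (length qj - L))) t2 j2 L" by blast
    have "(Pi ! (length qi - Suc L), Pi ! Suc (length qi - Suc L)) \<in> mdg_edges N n m A B lbar"
    proof -
      have "length qi - Suc L < length qi" using Suc.prems by auto
      then show ?thesis using Pi[unfolded is_mdg_path_of_def] by blast
    qed
    moreover have "Suc (length qi - Suc L) = length qi - L" using Suc.prems by auto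
    ultimately have e1: "(MX c t j (Suc L), MX (ecol (qi ! (length qi - L))) t1 j1 L) \<in> mdg_edges N n m A B lbar"
      using P1 Suc.prems by simp
    have "(Pj ! (length qj - Suc L), Pj ! Suc (length qj - Suc L)) \<in> mdg_edges N n m A B lbar"
    proof -
      have "length qj - Suc L < length qj" using Suc.prems by auto
      then show ?thesis using Pj[unfolded is_mdg_path_of_def] by blast
    qed
    moreover have "Suc (length qj - Suc L) = length qj - L" using Suc.prems by auto
    ultimately have e2: "(MX c t j' (Suc L), MX (ecol (qj ! (length qj - L))) t2 j2 L) \<in> mdg_edges N n m A B lbar"
      using P2 Suc.prems by simp
    from edge_MX_MX[OF e1] edge_MX_MX[OF e2] L1
    have "ecol (qi ! (length qi - L)) = ecol (qj ! (length qj - L)) \<and> t1 = t2"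
      using decode[of "ecol (qi ! (length qi - L))" "N^(Suc L - 2)" t1 "ecol (qj ! (length qj - L))" t2] by auto
    then show ?thesis using Suc.IH[of "ecol (qi ! (length qi - L))" t1 j1 j2 L'] L1 Suc.prems P1 P2
      by auto
  qed
qed

lemma rv_nth:
  assumes "p \<noteq> []" "r \<le> length p"
  shows "walk_verts (rev_walk p) ! r = (if r = 0 then ehead (p ! (length p - 1)) else etail (p ! (length p - r)))"
proof (cases r)
  case 0
  then show ?thesis using assms
    by (simp add: walk_verts_def rev_walk_def hd_rev last_map last_conv_nth rev_edge_def etail_def ehead_def)
next
  case (Suc r')
  then have "r' < length p" using assms by auto
  then show ?thesis using Suc assms
    by (simp add: walk_verts_def rev_walk_def rev_nth rev_edge_def etail_def ehead_def)
qed

lemma walk_link: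
  assumes "is_walk N n m A B p" "Suc s < length p"
  shows "ehead (p ! s) = etail (p ! Suc s)"
  using assms unfolding is_walk_def by blast

lemma rv_in:
  assumes w: "is_walk N n m A B p" and r: "r \<le> length p"
  shows "walk_verts (rev_walk p) ! r \<in> set (walk_verts p)"
proof -
  have ne: "p \<noteq> []" using w unfolding is_walk_def by auto
  show ?thesis
  proof (cases "r = 0")
    case True
    then show ?thesis using rv_nth[OF ne r] ne by (simp add: walk_verts_def)
  next
    case False
    show ?thesis
    proof (cases "r = length p")
      case True
      then show ?thesis using rv_nth[OF ne r] ne False by (simp add: walk_verts_def hd_conv_nth)
    next
      case F2: False
      have "ehead (p ! (length p - r - 1)) = etail (p ! Suc (length p - r - 1))"
        using walk_link[OF w] F2 False r by auto
      moreover have "Suc (length p - r - 1) = length p - r" using F2 False r by auto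
      moreover have "ehead (p ! (length p - r - 1)) \<in> set (walk_verts p)"
        using F2 r by (simp add: walk_verts_def)
      ultimately show ?thesis using rv_nth[OF ne r] False by simp
    qed
  qed
qed

lemma rc_nth:
  assumes "r < length p"
  shows "ecol (rev_walk p ! r) = ecol (p ! (length p - Suc r))"
  using assms by (simp add: rev_walk_def rev_nth rev_edge_def ecol_def)

lemma ins_pos_sym: "ins_pos vs ws = ins_pos ws vs"
proof -
  have "(\<lambda>q. q < length vs \<and> q < length ws \<and> vs ! q = ws ! q) = (\<lambda>q. q < length ws \<and> q < length vs \<and> ws ! q = vs ! q)"
    by auto
  moreover have "(\<exists>q. q < length vs \<and> q < length ws \<and> vs ! q = ws ! q) = (\<exists>q. q < length ws \<and> q < length vs \<and> ws ! q = vs ! q)"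
    by auto
  ultimately show ?thesis unfolding ins_pos_def by presburger
qed

lemma len_wv: "length (walk_verts p) = Suc (length p)"
  by (simp add: walk_verts_def)

lemma contra:
  assumes wi: "is_walk N n m A B qi" and wj: "is_walk N n m A B qj"
    and R: "R \<le> length qi" "R \<le> length qj"
    and v: "walk_verts (rev_walk qi) ! R = walk_verts (rev_walk qj) ! R"
    and c: "\<forall>r<R. ecol (rev_walk qi ! r) = ecol (rev_walk qj ! r)"
    and cond: "set (walk_verts qi) \<inter> set (walk_verts qj) = {}
      \<or> (ins (rev_walk qi) (rev_walk qj) \<noteq> None
         \<and> color_index (Pins (rev_walk qi) (rev_walk qj))
             \<noteq> color_index (Pins (rev_walk qj) (rev_walk qi)))"
  shows False
proof -
  have "walk_verts (rev_walk qi) ! R \<in> set (walk_verts qi) \<inter> set (walk_verts qj)"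
    using rv_in[OF wi R(1)] rv_in[OF wj R(2)] v by simp
  then have ne: "color_index (Pins (rev_walk qi) (rev_walk qj))
             \<noteq> color_index (Pins (rev_walk qj) (rev_walk qi))" using cond by blast
  define vs where "vs = walk_verts (rev_walk qi)"
  define ws where "ws = walk_verts (rev_walk qj)"
  let ?P = "\<lambda>q. q < length vs \<and> q < length ws \<and> vs ! q = ws ! q"
  have lv: "length vs = Suc (length qi)" "length ws = Suc (length qj)"
    unfolding vs_def ws_def by (simp_all add: len_wv rev_walk_def)
  have PR: "?P R" using R v lv unfolding vs_def ws_def by auto
  then have ip: "ins_pos vs ws = Some (Least ?P)" unfolding ins_pos_def by auto
  have QR: "Least ?P \<le> R" using PR by (rule Least_le)
  have ip2: "ins_pos ws vs = Some (Least ?P)" using ip ins_pos_sym by metis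
  have "color_index (Pins (rev_walk qi) (rev_walk qj)) = map ecol (take (Least ?P) (rev_walk qi))"
    using ip unfolding Pins_def color_index_def vs_def ws_def by simp
  moreover have "color_index (Pins (rev_walk qj) (rev_walk qi)) = map ecol (take (Least ?P) (rev_walk qj))"
    using ip2 unfolding Pins_def color_index_def vs_def ws_def by simp
  moreover have "map ecol (take (Least ?P) (rev_walk qi)) = map ecol (take (Least ?P) (rev_walk qj))"
  proof (rule nth_equalityI)
    show "length (map ecol (take (Least ?P) (rev_walk qi))) = length (map ecol (take (Least ?P) (rev_walk qj)))"
      using QR R by (simp add: rev_walk_def)
  next
    fix i assume "i < length (map ecol (take (Least ?P) (rev_walk qi)))"
    then have "i < Least ?P" "i < length qi" by (auto simp: rev_walk_def)
    then show "map ecol (take (Least ?P) (rev_walk qi)) ! i = map ecol (take (Least ?P) (rev_walk qj)) ! i"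
      using c QR R by (simp add: rev_walk_def)
  qed
  ultimately show False using ne by simp
qed

lemma col_first:
  assumes "is_walk N n m A B p" "etail (p ! 0) = U l q"
  shows "ecol (p ! 0) = l"
proof -
  have "p ! 0 \<in> cug_edges N n m A B" using assms unfolding is_walk_def by auto
  then show ?thesis using assms(2) unfolding cug_edges_def etail_def ecol_def by auto
qed

lemma classify:
  assumes P: "is_mdg_path_of N n m A B lbar p P" and ne: "p \<noteq> []" and a: "a \<le> length p"
  shows "(a = 0 \<and> (\<exists>l q c t. etail (p!0) = U l q \<and> P!0 = MU c t q l (length p - 1)))
    \<or> (1 \<le> a \<and> a < length p \<and> (\<exists>t j. ehead (p!(a-1)) = X j \<and> P!a = MX (ecol (p!a)) t j (length p - a)))
    \<or> (a = length p \<and> (\<exists>j. ehead (p!(length p - 1)) = X j \<and> P!a = MX 0 0 j 0))"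
proof (cases "a = 0")
  case True
  from P obtain l q where lq: "etail (p ! 0) = U l q \<and>
        (if length p = 1 then P ! 0 = MU 0 0 q l 0
         else (\<exists>t. P ! 0 = MU (ecol (p ! 1)) t q l (length p - 1)))"
    unfolding is_mdg_path_of_def by blast
  then have "\<exists>c t. P!0 = MU c t q l (length p - 1)"
    by (cases "length p = 1") auto
  then show ?thesis using True lq by blast
next
  case False
  show ?thesis
  proof (cases "a = length p")
    case True
    then show ?thesis using P False unfolding is_mdg_path_of_def by auto
  next
    case F2: False
    then show ?thesis using path_mid[OF P, of a] False a by auto
  qed
qed

lemma case_BB:
  assumes wi: "is_walk N n m A B qi" and wj: "is_walk N n m A B qj"
    and Pi: "is_mdg_path_of N n m A B lbar qi Pi" and Pj: "is_mdg_path_of N n m A B lbar qj Pj"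
    and a: "1 \<le> a" "a < length qi" and b: "1 \<le> b" "b < length qj"
    and hi: "ehead (qi!(a-1)) = X j" "Pi!a = MX c t j L"
    and hj: "ehead (qj!(b-1)) = X j" "Pj!b = MX c t j' L"
    and L: "L = length qi - a" "L = length qj - b"
    and cond: "set (walk_verts qi) \<inter> set (walk_verts qj) = {}
      \<or> (ins (rev_walk qi) (rev_walk qj) \<noteq> None
         \<and> color_index (Pins (rev_walk qi) (rev_walk qj))
             \<noteq> color_index (Pins (rev_walk qj) (rev_walk qi)))"
  shows False
proof (rule contra[OF wi wj _ _ _ _ cond])
  show "L \<le> length qi" "L \<le> length qj" using L by auto
  have nei: "qi \<noteq> []" and nej: "qj \<noteq> []" using a b by auto
  have La: "length qi - L = a" "length qj - L = b" "L \<noteq> 0" "L \<le> length qi" "L \<le> length qj" using L a b by auto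
  have "walk_verts (rev_walk qi) ! L = etail (qi ! a)"
    using rv_nth[OF nei, of L] La by simp
  also have "\<dots> = X j" using walk_link[OF wi, of "a-1"] a hi by auto
  finally have 1: "walk_verts (rev_walk qi) ! L = X j" .
  have "walk_verts (rev_walk qj) ! L = etail (qj ! b)"
    using rv_nth[OF nej, of L] La L by simp
  also have "\<dots> = X j" using walk_link[OF wj, of "b-1"] b hj by auto
  finally show "walk_verts (rev_walk qi) ! L = walk_verts (rev_walk qj) ! L" using 1 by simp
  show "\<forall>r<L. ecol (rev_walk qi ! r) = ecol (rev_walk qj ! r)"
  proof (intro allI impI)
    fix r assume r: "r < L"
    have m1: "Pi!(length qi - L) = MX c t j L" "Pj!(length qj - L) = MX c t j' L" using La hi hj by auto
    have m2: "1 \<le> L" "L < length qi" "L < length qj" "1 \<le> Suc r" "Suc r \<le> L" using L a b r by auto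
    have "ecol (qi ! (length qi - Suc r)) = ecol (qj ! (length qj - Suc r))"
      by (rule mx_cols[OF Pi Pj m2(1-3) m1 m2(4-5)])
    then show "ecol (rev_walk qi ! r) = ecol (rev_walk qj ! r)"
      using rc_nth[of r qi] rc_nth[of r qj] r L by auto
  qed
qed

lemma case_CC:
  assumes wi: "is_walk N n m A B qi" and wj: "is_walk N n m A B qj"
    and hi: "ehead (qi!(length qi - 1)) = X j" and hj: "ehead (qj!(length qj - 1)) = X j"
    and cond: "set (walk_verts qi) \<inter> set (walk_verts qj) = {}
      \<or> (ins (rev_walk qi) (rev_walk qj) \<noteq> None
         \<and> color_index (Pins (rev_walk qi) (rev_walk qj))
             \<noteq> color_index (Pins (rev_walk qj) (rev_walk qi)))"
  shows False
proof (rule contra[OF wi wj _ _ _ _ cond])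
  have nei: "qi \<noteq> []" and nej: "qj \<noteq> []" using wi wj unfolding is_walk_def by auto
  show "0 \<le> length qi" "0 \<le> length qj" by auto
  show "walk_verts (rev_walk qi) ! 0 = walk_verts (rev_walk qj) ! 0"
    using rv_nth[OF nei, of 0] rv_nth[OF nej, of 0] hi hj by simp
  show "\<forall>r<0. ecol (rev_walk qi ! r) = ecol (rev_walk qj ! r)" by simp
qed

lemma case_AA:
  assumes wi: "is_walk N n m A B qi" and wj: "is_walk N n m A B qj"
    and Pi: "is_mdg_path_of N n m A B lbar qi Pi" and Pj: "is_mdg_path_of N n m A B lbar qj Pj"
    and hi: "etail (qi!0) = U l q" "Pi!0 = MU c t q l (length qi - 1)"
    and hj: "etail (qj!0) = U l q" "Pj!0 = MU c t q l (length qj - 1)"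
    and KK: "length qi - 1 = length qj - 1"
    and cond: "set (walk_verts qi) \<inter> set (walk_verts qj) = {}
      \<or> (ins (rev_walk qi) (rev_walk qj) \<noteq> None
         \<and> color_index (Pins (rev_walk qi) (rev_walk qj))
             \<noteq> color_index (Pins (rev_walk qj) (rev_walk qi)))"
  shows False
proof -
  have nei: "qi \<noteq> []" and nej: "qj \<noteq> []" using wi wj unfolding is_walk_def by auto
  have K: "length qi = length qj" using KK nei nej
    by (metis One_nat_def Suc_pred length_greater_0_conv)
  define K where "K = length qi"
  show False
  proof (rule contra[OF wi wj _ _ _ _ cond])
    show "K \<le> length qi" "K \<le> length qj" using K K_def by auto
    show "walk_verts (rev_walk qi) ! K = walk_verts (rev_walk qj) ! K"
    proof -
      have "walk_verts (rev_walk qi) ! K = etail (qi!0)" using rv_nth[OF nei, of K] K_def nei by simp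
      moreover have "walk_verts (rev_walk qj) ! K = etail (qj!0)" using rv_nth[OF nej, of K] K K_def nej by simp
      ultimately show ?thesis using hi hj by simp
    qed
    show "\<forall>r<K. ecol (rev_walk qi ! r) = ecol (rev_walk qj ! r)"
    proof (intro allI impI)
      fix r assume r: "r < K"
      have "ecol (qi ! (K - Suc r)) = ecol (qj ! (K - Suc r))"
      proof (cases "r = K - 1")
        case True
        then show ?thesis using col_first[OF wi hi(1)] col_first[OF wj hj(1)] r by simp
      next
        case False
        then have K2: "K \<ge> 2" "Suc r \<le> K - 1" using r by auto
        have "\<exists>t j. ehead (qi ! (1 - 1)) = X j \<and> Pi ! 1 = MX (ecol (qi ! 1)) t j (length qi - 1)"
          using path_mid[OF Pi, of 1] K2 K_def by auto
        then obtain t1 j1 where p1: "Pi ! 1 = MX (ecol (qi ! 1)) t1 j1 (K - 1)" using K_def by auto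
        have "\<exists>t j. ehead (qj ! (1 - 1)) = X j \<and> Pj ! 1 = MX (ecol (qj ! 1)) t j (length qj - 1)"
          using path_mid[OF Pj, of 1] K2 K K_def by auto
        then obtain t2 j2 where p2: "Pj ! 1 = MX (ecol (qj ! 1)) t2 j2 (K - 1)" using K K_def by auto
        have "(Pi ! 0, Pi ! Suc 0) \<in> mdg_edges N n m A B lbar"
        proof -
          have "0 < length qi" using K2 K_def by auto
          then show ?thesis using Pi[unfolded is_mdg_path_of_def] by blast
        qed
        then have e1: "ecol (qi ! 1) = c \<and> t1 = t" using edge_MU[of c t q l "K-1"] hi p1 K_def by auto
        have "(Pj ! 0, Pj ! Suc 0) \<in> mdg_edges N n m A B lbar"
        proof -
          have "0 < length qj" using K2 K K_def by auto
          then show ?thesis using Pj[unfolded is_mdg_path_of_def] by blast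
        qed
        then have e2: "ecol (qj ! 1) = c \<and> t2 = t" using edge_MU[of c t q l "K-1"] hj p2 K K_def by auto
        show ?thesis
          using mx_cols[OF Pi Pj, of "K-1" c t j1 j2 "Suc r"] K2 K K_def p1 p2 e1 e2 by auto
      qed
      then show "ecol (rev_walk qi ! r) = ecol (rev_walk qj ! r)"
        using rc_nth[of r qi] rc_nth[of r qj] r K K_def by auto
    qed
  qed
qed

theorem lemma3:
  fixes N n :: nat and m :: "nat \<Rightarrow> nat"
    and A B :: "nat \<Rightarrow> nat \<Rightarrow> nat \<Rightarrow> real"
    and lbar :: nat
    and pi pj :: "cedge list"
    and Pi Pj :: "mvert list"
  assumes wi: "is_input_state_walk N n m A B pi"
    and wj: "is_input_state_walk N n m A B pj"
    and lbar: "lbar \<ge> max (length pi) (length pj)"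
    and Pi: "is_mdg_path_of N n m A B lbar pi Pi"
    and Pj: "is_mdg_path_of N n m A B lbar pj Pj"
    and cond: "set (walk_verts pi) \<inter> set (walk_verts pj) = {}
      \<or> (ins (rev_walk pi) (rev_walk pj) \<noteq> None
         \<and> color_index (Pins (rev_walk pi) (rev_walk pj))
             \<noteq> color_index (Pins (rev_walk pj) (rev_walk pi)))"
  shows "set Pi \<inter> set Pj = {}"
proof (rule ccontr)
  assume "set Pi \<inter> set Pj \<noteq> {}"
  then obtain v where "v \<in> set Pi" "v \<in> set Pj" by blast
  then obtain a b where ab: "a < length Pi" "Pi ! a = v" "b < length Pj" "Pj ! b = v"
    by (meson in_set_conv_nth)
  have iwi: "is_walk N n m A B pi" and iwj: "is_walk N n m A B pj"
    using wi wj unfolding is_input_state_walk_def by auto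
  have nei: "pi \<noteq> []" and nej: "pj \<noteq> []" using iwi iwj unfolding is_walk_def by auto
  have a: "a \<le> length pi" and b: "b \<le> length pj"
    using ab Pi Pj unfolding is_mdg_path_of_def by auto
  have eq: "Pi ! a = Pj ! b" using ab by simp
  note ci = classify[OF Pi nei a] and cj = classify[OF Pj nej b]
  show False
  proof -
    { assume "a = 0" "b = 0"
      then obtain l q c t l' q' c' t' where
        "etail (pi!0) = U l q" "Pi!0 = MU c t q l (length pi - 1)"
        "etail (pj!0) = U l' q'" "Pj!0 = MU c' t' q' l' (length pj - 1)"
        using ci cj nei nej by auto
      then have False using case_AA[OF iwi iwj Pi Pj _ _ _ _ _ cond] eq \<open>a = 0\<close> \<open>b = 0\<close> by auto }
    moreover
    { assume "1 \<le> a" "a < length pi" "1 \<le> b" "b < length pj"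
      then obtain t j t' j' where
        "ehead (pi!(a-1)) = X j" "Pi!a = MX (ecol (pi!a)) t j (length pi - a)"
        "ehead (pj!(b-1)) = X j'" "Pj!b = MX (ecol (pj!b)) t' j' (length pj - b)"
        using ci cj nei nej by auto
      then have False using case_BB[OF iwi iwj Pi Pj \<open>1 \<le> a\<close> \<open>a < length pi\<close> \<open>1 \<le> b\<close> \<open>b < length pj\<close>
          _ _ _ _ _ _ cond] eq by auto }
    moreover
    { assume "a = length pi" "b = length pj"
      then obtain j j' where
        "ehead (pi!(length pi - 1)) = X j" "Pi!a = MX 0 0 j 0"
        "ehead (pj!(length pj - 1)) = X j'" "Pj!b = MX 0 0 j' 0"
        using ci cj nei nej by auto
      then have False using case_CC[OF iwi iwj _ _ cond] eq by auto }
    moreover have "(a = 0 \<and> b = 0) \<or> (1 \<le> a \<and> a < length pi \<and> 1 \<le> b \<and> b < length pj)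
        \<or> (a = length pi \<and> b = length pj)"
      using ci cj eq nei nej by auto
    ultimately show False by blast
  qed
qed

end
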